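(* (i) For $(t,x)$ with $0\le t<1$ and $|x|>A^*\sqrt{1-t}$, $\mathcal{L}W^*(t,x)=0$. (ii) If $A^*>0$, then for $(t,x)$ with $0\le t<1$ and $0<|x|<A^*\sqrt{1-t}$, $\mathcal{L}W^*(t,x)\le0$. Here $$W^*(t,x)=\begin{cases}(1-t)^{q/2}G_q(|x|/\sqrt{1-t})\,w(A^* ), & |x|>A^*\sqrt{1-t},\\ h(t,x), & |x|\le A^*\sqrt{1-t}.\end{cases}$$
   Context: For a function $\xi(t,x)$, $\mathcal{L}\xi=\frac{\partial\xi}{\partial t}-\frac{x}{1-t}\frac{\partial\xi}{\partial x}+\frac12\frac{\partial^2\xi}{\partial x^2}$. $q>0$. $F_q(y):=\int_0^\infty u^{q-1}e^{yu-u^2/2}\,\mathrm{d}u$ and $G_q(y):=F_q(-y)$. $D^*>0$ is the unique positive root of $q-D(F_q+G_q)'(D)/(F_q+G_q)(D)=0$. $\overline{U}(t,x)=(1-t)^{q/2}(D^* )^q(F_q+G_q)(x/\sqrt{1-t})/(F_q+G_q)(D^* )$ if $|x|<D^*\sqrt{1-t}$, and $|x|^q$ otherwise. $h(t,x)=\overline{U}(t,x)-|x|^q$ if $|x|<D^*\sqrt{1-t}$, and $0$ otherwise. $w(A):=\frac{1}{G_q(A)}[(D^* )^q(F_q+G_q)(A)/(F_q+G_q)(D^* )-A^q]$ for $0\le A\le D^*$. $A^*$ is the unique maximizer of $w$ over $[0,D^*]$. *)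

theory Defs
  imports "HOL-Analysis.Analysis"
begin

definition Lop :: "(real \<Rightarrow> real \<Rightarrow> real) \<Rightarrow> real \<Rightarrow> real \<Rightarrow> real" where
  "Lop \<xi> t x = deriv (\<lambda>s. \<xi> s x) t - x / (1 - t) * deriv (\<lambda>y. \<xi> t y) x
      + 1/2 * deriv (\<lambda>y. deriv (\<lambda>z. \<xi> t z) y) x"

definition Fq :: "real \<Rightarrow> real \<Rightarrow> real" where
  "Fq q y = (LINT u:{0<..}|lborel. u powr (q - 1) * exp (y * u - u\<^sup>2 / 2))"

definition Gq :: "real \<Rightarrow> real \<Rightarrow> real" where
  "Gq q y = Fq q (- y)"

definition FGq :: "real \<Rightarrow> real \<Rightarrow> real" where
  "FGq q y = Fq q y + Gq q y"

definition Dstar :: "real \<Rightarrow> real" where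
  "Dstar q = (THE D. D > 0 \<and> q - D * deriv (FGq q) D / FGq q D = 0)"

definition Ubar :: "real \<Rightarrow> real \<Rightarrow> real \<Rightarrow> real" where
  "Ubar q t x = (if \<bar>x\<bar> < Dstar q * sqrt (1 - t)
     then (1 - t) powr (q / 2) * Dstar q powr q * FGq q (x / sqrt (1 - t)) / FGq q (Dstar q)
     else \<bar>x\<bar> powr q)"

definition hfun :: "real \<Rightarrow> real \<Rightarrow> real \<Rightarrow> real" where
  "hfun q t x = (if \<bar>x\<bar> < Dstar q * sqrt (1 - t) then Ubar q t x - \<bar>x\<bar> powr q else 0)"

definition wfun :: "real \<Rightarrow> real \<Rightarrow> real" where
  "wfun q A = (Dstar q powr q * FGq q A / FGq q (Dstar q) - A powr q) / Gq q A"

definition Astar :: "real \<Rightarrow> real" where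
  "Astar q = (THE A. A \<in> {0..Dstar q} \<and> (\<forall>B\<in>{0..Dstar q}. wfun q B \<le> wfun q A))"

definition Wstar :: "real \<Rightarrow> real \<Rightarrow> real \<Rightarrow> real" where
  "Wstar q t x = (if \<bar>x\<bar> > Astar q * sqrt (1 - t)
     then (1 - t) powr (q / 2) * Gq q (\<bar>x\<bar> / sqrt (1 - t)) * wfun q (Astar q)
     else hfun q t x)"

end

theory Submission
  imports Defs
begin

lemma gamma_set_integrable:
  assumes "p > (0::real)"
  shows "set_integrable lborel {0<..} (\<lambda>u. u powr (p-1) / exp u)"
proof -
  have "((\<lambda>t. t powr (p - 1) / exp t) has_integral Gamma p) {0..}"
    using Gamma_integral_real[OF assms] .
  hence "(\<lambda>t. t powr (p - 1) / exp t) absolutely_integrable_on {0..}"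
    by (intro nonnegative_absolutely_integrable_1) (auto simp: has_integral_integrable)
  hence "set_integrable lebesgue {0..} (\<lambda>t. t powr (p - 1) / exp t)" by simp
  hence "set_integrable lborel {0..} (\<lambda>t. t powr (p - 1) / exp t)"
    unfolding set_integrable_def
    by (subst (asm) integrable_completion) auto
  thus ?thesis
    by (rule set_integrable_subset) auto
qed

lemma exp_quad_bound: "exp (a*u - u\<^sup>2/2) \<le> exp ((a+1)\<^sup>2/2) / exp (u::real)"
proof -
  have "a*u - u\<^sup>2/2 \<le> (a+1)\<^sup>2/2 - u"
    using sum_squares_ge_zero[of "u - (a+1)" 0] by (simp add: power2_eq_square algebra_simps)
  hence "exp (a*u - u\<^sup>2/2) \<le> exp ((a+1)\<^sup>2/2 - u)" by simp
  thus ?thesis by (simp add: exp_diff)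
qed

lemma I_integrable:
  assumes "p > (0::real)"
  shows "set_integrable lborel {0<..} (\<lambda>u. u powr (p-1) * exp (a*u - u\<^sup>2/2))"
proof -
  have "set_integrable lborel {0<..} (\<lambda>u. exp ((a+1)\<^sup>2/2) * (u powr (p-1) / exp u))"
    using gamma_set_integrable[OF assms] by (rule set_integrable_mult_right)
  thus ?thesis
    unfolding set_integrable_def
  proof (rule Bochner_Integration.integrable_bound)
    show "(\<lambda>x. indicat_real {0<..} x *\<^sub>R (x powr (p - 1) * exp (a * x - x\<^sup>2 / 2))) \<in> borel_measurable lborel"
      by measurable
    show "AE x in lborel. norm (indicat_real {0<..} x *\<^sub>R (x powr (p - 1) * exp (a * x - x\<^sup>2 / 2)))
         \<le> norm (indicat_real {0<..} x *\<^sub>R (exp ((a + 1)\<^sup>2 / 2) * (x powr (p - 1) / exp x)))"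
    proof (rule AE_I2)
      fix x :: real
      have "x powr (p-1) * exp (a * x - x\<^sup>2 / 2) \<le> x powr (p-1) * (exp ((a+1)\<^sup>2/2) / exp x)"
        by (rule mult_left_mono[OF exp_quad_bound]) simp
      thus "norm (indicat_real {0<..} x *\<^sub>R (x powr (p - 1) * exp (a * x - x\<^sup>2 / 2)))
         \<le> norm (indicat_real {0<..} x *\<^sub>R (exp ((a + 1)\<^sup>2 / 2) * (x powr (p - 1) / exp x)))"
        by (auto simp: indicator_def abs_mult mult_ac)
    qed
  qed
qed

lemma Fq_integral: "Fq p y = integral\<^sup>L lborel (\<lambda>u. indicator {0<..} u * (u powr (p-1) * exp (y*u - u\<^sup>2/2)))"
  by (simp add: Fq_def set_lebesgue_integral_def)

lemma I_integrable': "p > (0::real) \<Longrightarrow> integrable lborel (\<lambda>u. indicator {0<..} u * (u powr (p-1) * exp (y*u - u\<^sup>2/2)))"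
  using I_integrable[of p y] by (simp add: set_integrable_def)

lemma Fq_pos:
  assumes "p > 0" shows "Fq p y > 0"
proof -
  let ?f = "\<lambda>u::real. indicator {0<..} u * (u powr (p-1) * exp (y*u - u\<^sup>2/2))"
  have nn: "AE u in lborel. 0 \<le> ?f u" by (auto simp: indicator_def)
  have ge: "integral\<^sup>L lborel ?f \<ge> 0" by (rule integral_nonneg_AE[OF nn])
  have ne: "integral\<^sup>L lborel ?f \<noteq> 0"
  proof
    assume "integral\<^sup>L lborel ?f = 0"
    hence ae: "AE u in lborel. ?f u = 0"
      using integral_nonneg_eq_0_iff_AE[OF I_integrable'[OF assms] nn] by simp
    have "AE u in lborel. (u::real) \<notin> {0<..}" by (rule eventually_mono[OF ae]) (auto simp: indicator_def)
    hence "emeasure lborel {0::real<..} = 0"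
      by (subst (asm) AE_iff_measurable[where N="{0<..}"]) auto
    moreover have "emeasure lborel {0<..<1::real} \<le> emeasure lborel {0::real<..}"
      by (rule emeasure_mono) (auto simp: greaterThan_def)
    ultimately show False by simp
  qed
  show ?thesis unfolding Fq_integral using ge ne by linarith
qed

lemma exp_sub_one_bound: "\<bar>exp x - 1\<bar> \<le> \<bar>x\<bar> * exp \<bar>x\<bar>" for x :: real
proof (cases "x \<ge> 0")
  case True
  have "1 - x \<le> exp (-x)" using exp_ge_add_one_self[of "-x"] by simp
  hence "(1 - x) * exp x \<le> exp (-x) * exp x" by (simp add: mult_right_mono)
  hence "exp x - 1 \<le> x * exp x" by (simp add: exp_minus field_simps)
  thus ?thesis using True by simp
next
  case False
  have "1 + x \<le> exp x" using exp_ge_add_one_self[of x] by simp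
  moreover have "-x \<le> -x * exp (-x)" using False by simp
  ultimately have "1 - exp x \<le> -x * exp (-x)" by linarith
  thus ?thesis using False by simp
qed

lemma powr_mult_base': "x > 0 \<Longrightarrow> x powr (p-1) * x = x powr (p::real)"
  by (simp add: powr_mult_base mult.commute)

lemma powr_mult_base'': "x > 0 \<Longrightarrow> x * x powr (p-1) = x powr (p::real)"
  by (simp add: powr_mult_base)

lemma Fq_deriv:
  assumes p: "p > 0"
  shows "(Fq p has_real_derivative Fq (p+1) y) (at y)"
  unfolding DERIV_def tendsto_at_iff_sequentially
proof (intro allI impI)
  fix X :: "nat \<Rightarrow> real"
  assume X0: "\<forall>i. X i \<in> UNIV - {0}" and X: "X \<longlonglongrightarrow> 0"
  have "Bseq X" using X by (rule convergent_imp_Bseq[OF convergentI])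
  then obtain K where K: "K > 0" "\<And>n. norm (X n) \<le> K" by (auto elim: BseqE)
  define g where "g = (\<lambda>u::real. indicator {0<..} u * (u powr (p-1) * exp (y*u - u\<^sup>2/2)))"
  define s where "s = (\<lambda>n u. g u * ((exp (X n * u) - 1) / X n))"
  define w where "w = (\<lambda>u::real. indicator {0<..} u * (u powr ((p+1)-1) * exp ((y+K)*u - u\<^sup>2/2)))"
  have gi: "integrable lborel g" unfolding g_def by (rule I_integrable'[OF p])
  have wi: "integrable lborel w" unfolding w_def using p by (intro I_integrable') simp
  have eq: "(Fq p (y + X n) - Fq p y) / X n = integral\<^sup>L lborel (s n)" for n
  proof -
    have i1: "integrable lborel (\<lambda>u. g u * exp (X n * u))"
      using I_integrable'[OF p, of "y + X n"]
      by (rule back_subst[of "integrable lborel"]) (auto simp: g_def fun_eq_iff algebra_simps exp_add[symmetric])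
    have "Fq p (y + X n) = integral\<^sup>L lborel (\<lambda>u. g u * exp (X n * u))"
      unfolding Fq_integral g_def
      by (rule Bochner_Integration.integral_cong) (auto simp: algebra_simps exp_add[symmetric])
    moreover have "Fq p y = integral\<^sup>L lborel g" unfolding Fq_integral g_def ..
    ultimately have "Fq p (y + X n) - Fq p y = integral\<^sup>L lborel (\<lambda>u. g u * exp (X n * u) - g u)"
      using i1 gi by simp
    also have "\<dots> = integral\<^sup>L lborel (\<lambda>u. g u * (exp (X n * u) - 1))"
      by (simp add: algebra_simps)
    finally have "(Fq p (y + X n) - Fq p y) / X n = integral\<^sup>L lborel (\<lambda>u. g u * (exp (X n * u) - 1)) / X n" by simp
    also have "\<dots> = integral\<^sup>L lborel (\<lambda>u. g u * (exp (X n * u) - 1) / X n)"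
      by simp
    finally show ?thesis by (simp add: s_def)
  qed
  have lim: "(\<lambda>n. integral\<^sup>L lborel (s n)) \<longlonglongrightarrow> integral\<^sup>L lborel (\<lambda>u. g u * u)"
  proof (rule integral_dominated_convergence[where w=w])
    show "(\<lambda>u. g u * u) \<in> borel_measurable lborel" unfolding g_def by measurable
    show "s n \<in> borel_measurable lborel" for n unfolding s_def g_def by measurable
    show "integrable lborel w" by (rule wi)
    show "AE u in lborel. (\<lambda>n. s n u) \<longlonglongrightarrow> g u * u"
    proof (rule AE_I2)
      fix u :: real
      have "((\<lambda>h. exp (h * u)) has_real_derivative exp (0 * u) * u) (at 0)"
        by (auto intro!: derivative_eq_intros)
      hence "((\<lambda>h. (exp ((0 + h) * u) - exp (0 * u)) / h) \<longlongrightarrow> u) (at 0)"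
        unfolding DERIV_def by simp
      hence "(\<lambda>n. (exp (X n * u) - 1) / X n) \<longlonglongrightarrow> u"
        unfolding tendsto_at_iff_sequentially using X0 X by (auto simp: comp_def)
      thus "(\<lambda>n. s n u) \<longlonglongrightarrow> g u * u"
        unfolding s_def by (intro tendsto_intros)
    qed
    show "AE u in lborel. norm (s n u) \<le> w u" for n
    proof (rule AE_I2)
      fix u :: real
      show "norm (s n u) \<le> w u"
      proof (cases "u > 0")
        case False thus ?thesis by (simp add: s_def g_def w_def)
      next
        case True
        have Xn: "X n \<noteq> 0" using X0 by auto
        have "\<bar>(exp (X n * u) - 1) / X n\<bar> \<le> u * exp (K * u)"
        proof -
          have "\<bar>exp (X n * u) - 1\<bar> \<le> \<bar>X n * u\<bar> * exp \<bar>X n * u\<bar>" by (rule exp_sub_one_bound)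
          also have "\<dots> \<le> \<bar>X n\<bar> * u * exp (K * u)"
            using True K(2)[of n] by (auto simp: abs_mult intro!: mult_left_mono mult_right_mono)
          finally show ?thesis using Xn by (simp add: abs_divide divide_le_eq mult_ac)
        qed
        moreover have "\<bar>s n u\<bar> = \<bar>g u\<bar> * \<bar>(exp (X n * u) - 1) / X n\<bar>"
          unfolding s_def by (rule abs_mult)
        moreover have "\<bar>g u\<bar> = u powr (p-1) * exp (y*u - u\<^sup>2/2)" using True by (simp add: g_def)
        ultimately have "\<bar>s n u\<bar> \<le> u powr (p-1) * exp (y*u - u\<^sup>2/2) * (u * exp (K * u))"
          by (simp del: abs_divide add: mult_left_mono)
        also have "\<dots> = w u"
          using True by (simp add: w_def powr_add[symmetric] exp_add[symmetric] algebra_simps powr_mult_base)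
        finally show ?thesis by simp
      qed
    qed
  qed
  moreover have "integral\<^sup>L lborel (\<lambda>u. g u * u) = Fq (p+1) y"
    unfolding Fq_integral g_def
    by (rule Bochner_Integration.integral_cong) (auto simp: powr_mult_base' powr_mult_base'' indicator_def mult_ac)
  ultimately show "((\<lambda>h. (Fq p (y + h) - Fq p y) / h) \<circ> X) \<longlonglongrightarrow> Fq (p + 1) y"
    using eq by (simp add: comp_def)
qed

lemma powr_plus1: "x > 0 \<Longrightarrow> x powr p * x = x powr (p+1::real)"
  by (simp add: powr_add)


lemma Fq_ode:
  assumes p: "p > 0"
  shows "Fq (p+2) y = y * Fq (p+1) y + p * Fq p y"
proof -
  define e where "e = (\<lambda>u::real. exp (y*u - u\<^sup>2/2))"
  define F where "F = (\<lambda>u::real. u powr p * e u)"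
  define f where "f = (\<lambda>u::real. p * (u powr (p-1) * e u) + y * (u powr ((p+1)-1) * e u) - u powr ((p+2)-1) * e u)"
  have i0: "set_integrable lborel {0<..} (\<lambda>u. u powr (p-1) * e u)"
    unfolding e_def using I_integrable[OF p] .
  have i1: "set_integrable lborel {0<..} (\<lambda>u. u powr ((p+1)-1) * e u)"
    unfolding e_def using I_integrable[of "p+1"] p by simp
  have i2: "set_integrable lborel {0<..} (\<lambda>u. u powr ((p+2)-1) * e u)"
    unfolding e_def using I_integrable[of "p+2"] p by simp
  have fi: "set_integrable lborel (einterval (ereal 0) \<infinity>) f"
    unfolding f_def einterval_eq_Ici
    by (intro set_integral_diff(1) set_integral_add(1) set_integrable_mult_right i0 i1 i2)
  have "(LBINT x=ereal 0..\<infinity>. f x) = 0 - 0"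
  proof (rule interval_integral_FTC_integrable)
    show "ereal 0 < \<infinity>" by simp
    fix x assume "ereal 0 < ereal x" "ereal x < \<infinity>"
    hence x: "x > 0" by simp
    have "(F has_real_derivative p * x powr (p-1) * e x + x powr p * (e x * (y - x))) (at x)"
      unfolding F_def e_def using x
      by (auto intro!: derivative_eq_intros simp: power2_eq_square)
    moreover have "p * x powr (p-1) * e x + x powr p * (e x * (y - x)) = f x"
    proof -
      have a1: "(p+1)-1 = p" "(p+2)-1 = p+1" by simp_all
      have a2: "x powr (p+1) = x powr p * x" using powr_plus1[OF x] by simp
      show ?thesis unfolding f_def a1 a2 by (simp add: algebra_simps)
    qed
    ultimately show "(F has_vector_derivative f x) (at x)"
      by (simp add: has_real_derivative_iff_has_vector_derivative)
    show "isCont f x" unfolding f_def e_def using x by (intro continuous_intros) auto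
  next
    show "set_integrable lborel (einterval (ereal 0) \<infinity>) f" by (rule fi)
  next
    have "((\<lambda>u. u powr p * e u) \<longlongrightarrow> 0 * e 0) (at_right 0)"
      unfolding e_def
      by (intro tendsto_intros tendsto_zero_powrI) (auto simp: p eventually_at_right_less intro: eventually_mono[OF eventually_at_right_less])
    thus "((F \<circ> real_of_ereal) \<longlongrightarrow> 0) (at_right (ereal 0))"
      by (simp add: ereal_tendsto_simps1 F_def)
  next
    have b: "0 \<le> F u \<and> F u \<le> exp ((y+p+1)\<^sup>2/2) * exp (-u)" if "u \<ge> 1" for u
    proof -
      have "u powr p \<le> exp (p * u)"
      proof -
        have "ln u \<le> u" using ln_le_minus_one[of u] that by simp
        hence "p * ln u \<le> p * u" using p by simp
        thus ?thesis using that by (simp add: powr_def)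
      qed
      hence "F u \<le> exp (p * u) * e u" unfolding F_def e_def by (simp add: mult_right_mono)
      also have "\<dots> = exp ((y+p)*u - u\<^sup>2/2)" unfolding e_def by (simp add: exp_add[symmetric] algebra_simps)
      also have "\<dots> \<le> exp ((y+p+1)\<^sup>2/2) / exp u" by (rule exp_quad_bound)
      finally have "F u \<le> exp ((y+p+1)\<^sup>2/2) / exp u" .
      moreover have "exp ((y+p+1)\<^sup>2/2) / exp u = exp ((y+p+1)\<^sup>2/2) * exp (-u)"
        by (metis exp_diff exp_add diff_conv_add_uminus)
      moreover have "0 \<le> F u" by (simp add: F_def e_def)
      ultimately show ?thesis by simp
    qed
    have hl: "((\<lambda>u. exp ((y+p+1)\<^sup>2/2) * exp (-u)) \<longlongrightarrow> exp ((y+p+1)\<^sup>2/2) * 0) at_top"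
      by (intro tendsto_intros filterlim_compose[OF exp_at_bot filterlim_uminus_at_bot_at_top])
    have ev: "eventually (\<lambda>u. 0 \<le> F u \<and> F u \<le> exp ((y+p+1)\<^sup>2/2) * exp (-u)) at_top"
      by (rule eventually_mono[OF eventually_ge_at_top[of 1]]) (rule b)
    have e1: "eventually (\<lambda>u. (0::real) \<le> F u) at_top"
      using ev by (rule eventually_mono) (rule conjunct1)
    have e2: "eventually (\<lambda>u. F u \<le> exp ((y+p+1)\<^sup>2/2) * exp (-u)) at_top"
      using ev by (rule eventually_mono) (rule conjunct2)
    have "(F \<longlongrightarrow> 0) at_top"
      using tendsto_sandwich[OF e1 e2 tendsto_const] hl by simp
    thus "((F \<circ> real_of_ereal) \<longlongrightarrow> 0) (at_left \<infinity>)"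
      by (simp add: ereal_tendsto_simps1)
  qed
  moreover have "(LBINT x=ereal 0..\<infinity>. f x) = p * Fq p y + y * Fq (p+1) y - Fq (p+2) y"
  proof -
    have "(LBINT x=ereal 0..\<infinity>. f x) = (LINT u:{0<..}|lborel. f u)"
      by (simp add: interval_lebesgue_integral_def)
    also have "\<dots> = p * (LINT u:{0<..}|lborel. u powr (p-1) * e u) + y * (LINT u:{0<..}|lborel. u powr ((p+1)-1) * e u)
          - (LINT u:{0<..}|lborel. u powr ((p+2)-1) * e u)"
      unfolding f_def
      apply (subst set_integral_diff(2))
        apply (intro set_integral_add(1) set_integrable_mult_right i0 i1; simp)
       apply (rule i2)
      apply (subst set_integral_add(2))
        apply (intro set_integrable_mult_right i0 i1; simp)
       apply (intro set_integrable_mult_right i0 i1; simp)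
      apply (simp only: set_integral_mult_right)
      done
    finally show ?thesis by (simp add: Fq_def e_def)
  qed
  ultimately show ?thesis by simp
qed

lemma Lop_formula:
  assumes dt: "((\<lambda>s. V s x) has_real_derivative Vt) (at t)"
    and N: "open N" "x \<in> N"
    and d1: "\<And>z. z \<in> N \<Longrightarrow> ((\<lambda>y. V t y) has_real_derivative V1 z) (at z)"
    and d2: "(V1 has_real_derivative V2) (at x)"
  shows "Lop V t x = Vt - x / (1 - t) * V1 x + 1/2 * V2"
proof -
  have "deriv (\<lambda>s. V s x) t = Vt" using dt by (rule DERIV_imp_deriv)
  moreover have "deriv (\<lambda>y. V t y) x = V1 x" using d1[OF N(2)] by (rule DERIV_imp_deriv)
  moreover have "deriv (\<lambda>y. deriv (\<lambda>z. V t z) y) x = deriv V1 x"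
  proof (rule deriv_cong_ev)
    show "\<forall>\<^sub>F y in nhds x. deriv (\<lambda>z. V t z) y = V1 y"
      using N by (intro eventually_nhds_in_open[THEN eventually_mono]) (auto intro: DERIV_imp_deriv d1)
  qed simp
  moreover have "deriv V1 x = V2" using d2 by (rule DERIV_imp_deriv)
  ultimately show ?thesis by (simp add: Lop_def)
qed

lemma Lop_cong:
  assumes S: "open S" "(t, x) \<in> S"
    and eq: "\<And>s z. (s, z) \<in> S \<Longrightarrow> W s z = V s z"
  shows "Lop W t x = Lop V t x"
proof -
  have o1: "open {s. (s, x) \<in> S}"
  proof -
    have "continuous_on UNIV (\<lambda>s. (s, x))" by (intro continuous_intros)
    from open_vimage[OF S(1) this] show ?thesis by (simp add: vimage_def)
  qed
  have o2: "open {z. (t, z) \<in> S}"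
  proof -
    have "continuous_on UNIV (\<lambda>z. (t, z))" by (intro continuous_intros)
    from open_vimage[OF S(1) this] show ?thesis by (simp add: vimage_def)
  qed
  have "deriv (\<lambda>s. W s x) t = deriv (\<lambda>s. V s x) t"
    by (rule deriv_cong_ev[OF eventually_nhds_in_open[OF o1, THEN eventually_mono]]) (use S eq in auto)
  moreover have dd: "deriv (\<lambda>y. W t y) z = deriv (\<lambda>y. V t y) z" if "(t, z) \<in> S" for z
    by (rule deriv_cong_ev[OF eventually_nhds_in_open[OF o2, THEN eventually_mono]]) (use that eq in auto)
  moreover have "deriv (\<lambda>y. deriv (\<lambda>z. W t z) y) x = deriv (\<lambda>y. deriv (\<lambda>z. V t z) y) x"
    by (rule deriv_cong_ev[OF eventually_nhds_in_open[OF o2, THEN eventually_mono]]) (use S dd in auto)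
  ultimately show ?thesis using S by (simp add: Lop_def dd)
qed

definition sol :: "real \<Rightarrow> (real \<Rightarrow> real) \<Rightarrow> (real \<Rightarrow> real) \<Rightarrow> bool" where
  "sol q \<phi> \<phi>1 \<longleftrightarrow> (\<forall>y. (\<phi> has_real_derivative \<phi>1 y) (at y)) \<and>
     (\<forall>y. (\<phi>1 has_real_derivative (y * \<phi>1 y + q * \<phi> y)) (at y))"

lemma Lop_alg:
  fixes r a k A P P1 x e q R1 R2 \<sigma> :: real
  assumes "r > 0" "a = r * r"
  shows "k*(-(q/2)*(A/a)*P + A*(P1*(x/(2*a*r)))) - x/a*(k*(A*(P1/r)) - e*(q*R1*\<sigma>))
     + 1/2*(k*(A*((x/r)*P1 + q*P)/a) - e*(q*((q-1)*R2*\<sigma>)*\<sigma>))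
     = e*(q*(x*R1*\<sigma>)/a - q*(q-1)/2*R2*(\<sigma>*\<sigma>))"
  using assms by (simp add: field_simps)

lemma Lop_V:
  fixes k e q t x \<sigma> :: real
  assumes sol: "sol q \<phi> \<phi>1" and t: "t < 1" and sg: "\<sigma> = 1 \<or> \<sigma> = -1" and x: "\<sigma> * x > 0"
  defines "V \<equiv> (\<lambda>s z. k * ((1 - s) powr (q/2) * \<phi> (z / sqrt (1 - s))) - e * (\<sigma> * z) powr q)"
  shows "Lop V t x = e * (q * (\<sigma> * x) powr q / (1 - t) - q * (q - 1) / 2 * (\<sigma> * x) powr (q - 2))"
proof -
  have d\<phi>: "\<And>y. (\<phi> has_real_derivative \<phi>1 y) (at y)" and d\<phi>1: "\<And>y. (\<phi>1 has_real_derivative (y * \<phi>1 y + q * \<phi> y)) (at y)"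
    using sol by (auto simp: sol_def)
  define a where "a = 1 - t"
  define r where "r = sqrt a"
  define A where "A = a powr (q/2)"
  have a: "a > 0" using t by (simp add: a_def)
  have r: "r > 0" "r * r = a" using a by (auto simp: r_def)
  define N where "N = {z. \<sigma> * z > 0}"
  have oN: "open N" unfolding N_def by (intro open_Collect_less continuous_intros)
  have xN: "x \<in> N" using x by (simp add: N_def)
  define Vt where "Vt = k * (-(q/2) * (A / a) * \<phi> (x / r) + A * (\<phi>1 (x / r) * (x / (2 * a * r))))"
  define V1 where "V1 = (\<lambda>z. k * (A * (\<phi>1 (z / r) / r)) - e * (q * (\<sigma> * z) powr (q - 1) * \<sigma>))"
  define V2 where "V2 = k * (A * ((x / r) * \<phi>1 (x / r) + q * \<phi> (x / r)) / a) - e * (q * ((q - 1) * (\<sigma> * x) powr (q - 2) * \<sigma>) * \<sigma>)"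
  have ch: "\<And>g g' D w. (g has_real_derivative g') (at w) \<Longrightarrow> D = \<phi>1 (g w) * g' \<Longrightarrow> ((\<lambda>s. \<phi> (g s)) has_real_derivative D) (at w)"
    using DERIV_chain2[OF d\<phi>] by blast
  have ch1: "\<And>g g' D w. (g has_real_derivative g') (at w) \<Longrightarrow> D = (g w * \<phi>1 (g w) + q * \<phi> (g w)) * g' \<Longrightarrow> ((\<lambda>s. \<phi>1 (g s)) has_real_derivative D) (at w)"
    using DERIV_chain2[OF d\<phi>1] by blast
  have lin: "((\<lambda>s. 1 - s) has_real_derivative -1) (at t)"
    by (rule DERIV_cong[OF DERIV_diff[OF DERIV_const DERIV_ident]]) simp
  have h_sq: "((\<lambda>s. sqrt (1 - s)) has_real_derivative -(1/(2*r))) (at t)"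
  proof (rule DERIV_cong[OF DERIV_chain2[OF DERIV_real_sqrt lin]])
    show "0 < 1 - t" using t by simp
    have sr: "sqrt (1 - t) = r" by (simp add: r_def a_def)
    show "inverse (sqrt (1 - t)) / 2 * - 1 = - (1 / (2 * r))" unfolding sr using r by (simp add: field_simps)
  qed
  have h_div: "((\<lambda>s. x / sqrt (1 - s)) has_real_derivative x/(2*a*r)) (at t)"
  proof -
    have h_inv: "((\<lambda>s. inverse (sqrt (1 - s))) has_real_derivative 1/(2*a*r)) (at t)"
    proof (rule DERIV_cong[OF DERIV_inverse_fun[OF h_sq]])
      show "sqrt (1 - t) \<noteq> 0" using a by (simp add: a_def)
      have "sqrt (1 - t) ^ Suc (Suc 0) = a" using a by (simp add: a_def)
      hence "inverse (sqrt (1 - t) ^ Suc (Suc 0)) = inverse a" by simp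
      moreover have "1 / (2 * r) * inverse a = 1 / (2 * a * r)" using r a by (simp add: field_simps)
      ultimately show "- (- (1 / (2 * r)) * inverse (sqrt (1 - t) ^ Suc (Suc 0))) = 1 / (2 * a * r)"
        by simp
    qed
    have "((\<lambda>s. x * inverse (sqrt (1 - s))) has_real_derivative x * (1/(2*a*r))) (at t)"
      by (rule DERIV_cmult[OF h_inv])
    moreover have "(\<lambda>s. x * inverse (sqrt (1 - s))) = (\<lambda>s. x / sqrt (1 - s))"
      by (rule ext) (rule divide_inverse[symmetric])
    moreover have "x * (1/(2*a*r)) = x/(2*a*r)" by simp
    ultimately show ?thesis by simp
  qed
  have sr: "sqrt (1 - t) = r" by (simp add: r_def a_def)
  have Aeq: "(1 - t) powr (q/2) = A" by (simp add: A_def a_def)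
  have ta: "1 - t = a" by (simp add: a_def)
  have h_pow: "((\<lambda>s. (1 - s) powr (q/2)) has_real_derivative -(q/2)*(A/a)) (at t)"
  proof (rule DERIV_cong[OF DERIV_fun_powr[OF lin]])
    show "0 < 1 - t" using t by simp
    have "(1 - t) powr (q/2 - real 1) = A / a" unfolding ta A_def using a by (simp add: powr_diff)
    thus "q / 2 * (1 - t) powr (q / 2 - real 1) * - 1 = - (q / 2) * (A / a)" by simp
  qed
  have h_phi: "((\<lambda>s. \<phi> (x / sqrt (1 - s))) has_real_derivative \<phi>1 (x / r) * (x/(2*a*r))) (at t)"
    using DERIV_chain2[OF d\<phi> h_div] unfolding sr .
  have dVt: "((\<lambda>s. V s x) has_real_derivative Vt) (at t)"
    unfolding V_def
  proof (rule DERIV_cong[OF DERIV_diff[OF DERIV_cmult[OF DERIV_mult[OF h_pow h_phi]] DERIV_const]])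
    show "k * (- (q / 2) * (A / a) * \<phi> (x / sqrt (1 - t)) + \<phi>1 (x / r) * (x / (2 * a * r)) * (1 - t) powr (q / 2)) - 0 = Vt"
      unfolding sr Aeq Vt_def by (simp add: algebra_simps)
  qed
  have sz: "\<sigma> * \<sigma> = 1" using sg by auto
  have dpow: "((\<lambda>y. (\<sigma> * y) powr c) has_real_derivative c * (\<sigma> * z) powr (c - 1) * \<sigma>) (at z)" if "\<sigma> * z > 0" for z c
    by (rule DERIV_cong[OF DERIV_fun_powr[OF DERIV_cmult[OF DERIV_ident]]]) (use that in simp_all)
  have dlin: "((\<lambda>y. y / r) has_real_derivative 1 / r) (at z)" for z
    using DERIV_cdivide[OF DERIV_ident, of r z] by simp
  moreover have "((\<lambda>y. V t y) has_real_derivative V1 z) (at z)" if "z \<in> N" for z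
  proof -
    have zz: "\<sigma> * z > 0" using that by (simp add: N_def)
    have "((\<lambda>y. k * (A * \<phi> (y / r)) - e * (\<sigma> * y) powr q) has_real_derivative
          k * (A * (\<phi>1 (z / r) * (1 / r))) - e * (q * (\<sigma> * z) powr (q - 1) * \<sigma>)) (at z)"
      by (intro DERIV_diff DERIV_cmult DERIV_chain2[OF d\<phi> dlin] dpow zz)
    moreover have "(\<lambda>y. k * (A * \<phi> (y / r)) - e * (\<sigma> * y) powr q) = (\<lambda>y. V t y)"
      by (simp add: V_def sr Aeq)
    ultimately show ?thesis by (simp add: V1_def)
  qed
  moreover have "(V1 has_real_derivative V2) (at x)"
  proof -
    have "(V1 has_real_derivative k * (A * (((x / r) * \<phi>1 (x / r) + q * \<phi> (x / r)) * (1 / r) / r)) - e * (q * ((q - 1) * (\<sigma> * x) powr (q - 1 - 1) * \<sigma>) * \<sigma>)) (at x)"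
      unfolding V1_def
      by (intro DERIV_diff DERIV_cmult DERIV_cmult_right DERIV_cdivide DERIV_chain2[OF d\<phi>1 dlin] dpow x)
    moreover have "k * (A * (((x / r) * \<phi>1 (x / r) + q * \<phi> (x / r)) * (1 / r) / r)) - e * (q * ((q - 1) * (\<sigma> * x) powr (q - 1 - 1) * \<sigma>) * \<sigma>) = V2"
      unfolding V2_def using r by (simp add: field_simps)
    ultimately show ?thesis by simp
  qed
  ultimately have "Lop V t x = Vt - x / (1 - t) * V1 x + 1/2 * V2"
    by (intro Lop_formula[where V=V and x=x and t=t, OF dVt oN xN]) auto
  also have "\<dots> = e*(q*(x*((\<sigma> * x) powr (q - 1))*\<sigma>)/a - q*(q-1)/2*((\<sigma> * x) powr (q - 2))*(\<sigma>*\<sigma>))"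
    unfolding Vt_def V1_def V2_def ta using Lop_alg[of r a] r by simp
  finally have L: "Lop V t x = e*(q*(x*((\<sigma> * x) powr (q - 1))*\<sigma>)/a - q*(q-1)/2*((\<sigma> * x) powr (q - 2))*(\<sigma>*\<sigma>))" .
  have B: "x*((\<sigma> * x) powr (q - 1))*\<sigma> = (\<sigma> * x) powr q"
    using powr_mult_base''[OF x, of q] by (simp add: mult_ac)
  show ?thesis unfolding L B sz ta by simp
qed

lemma sol_F:
  assumes q: "q > 0" shows "sol q (Fq q) (Fq (q+1))"
  unfolding sol_def
proof (intro conjI allI)
  fix y
  show "(Fq q has_real_derivative Fq (q + 1) y) (at y)" by (rule Fq_deriv[OF q])
  have "(Fq (q+1) has_real_derivative Fq (q + 1 + 1) y) (at y)" using q by (intro Fq_deriv) simp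
  moreover have "Fq (q + 1 + 1) y = y * Fq (q+1) y + q * Fq q y"
    using Fq_ode[OF q, of y] by (simp add: add.assoc)
  ultimately show "(Fq (q+1) has_real_derivative y * Fq (q+1) y + q * Fq q y) (at y)" by simp
qed

lemma sol_reflect:
  assumes "sol q \<phi> \<phi>1" shows "sol q (\<lambda>y. \<phi> (- y)) (\<lambda>y. - \<phi>1 (- y))"
  unfolding sol_def
proof (intro conjI allI)
  fix y
  have d0: "\<And>y. (\<phi> has_real_derivative \<phi>1 y) (at y)" and d1: "\<And>y. (\<phi>1 has_real_derivative (y * \<phi>1 y + q * \<phi> y)) (at y)"
    using assms by (auto simp: sol_def)
  have m: "((\<lambda>y. - y) has_real_derivative -1) (at y)" by (rule DERIV_cong[OF DERIV_minus[OF DERIV_ident]]) simp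
  show "((\<lambda>y. \<phi> (- y)) has_real_derivative - \<phi>1 (- y)) (at y)"
    using DERIV_chain2[OF d0 m] by simp
  show "((\<lambda>y. - \<phi>1 (- y)) has_real_derivative y * - \<phi>1 (- y) + q * \<phi> (- y)) (at y)"
    using DERIV_minus[OF DERIV_chain2[OF d1 m]] by (simp add: algebra_simps)
qed

lemma sol_add:
  assumes "sol q \<phi> \<phi>1" "sol q \<psi> \<psi>1" shows "sol q (\<lambda>y. \<phi> y + \<psi> y) (\<lambda>y. \<phi>1 y + \<psi>1 y)"
  using assms unfolding sol_def
  by (auto intro!: DERIV_cong[OF DERIV_add] simp: algebra_simps)

lemma sol_G: "q > 0 \<Longrightarrow> sol q (Gq q) (\<lambda>y. - Fq (q+1) (- y))"
  using sol_reflect[OF sol_F] by (simp add: Gq_def[abs_def])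

lemma sol_FG: "q > 0 \<Longrightarrow> sol q (FGq q) (\<lambda>y. Fq (q+1) y - Fq (q+1) (- y))"
  using sol_add[OF sol_F sol_G] by (simp add: FGq_def[abs_def])

lemma sol_D: "sol q \<phi> \<phi>1 \<Longrightarrow> (\<phi> has_real_derivative \<phi>1 y) (at y)"
  by (simp add: sol_def)
lemma sol_D1: "sol q \<phi> \<phi>1 \<Longrightarrow> (\<phi>1 has_real_derivative (y * \<phi>1 y + q * \<phi> y)) (at y)"
  by (simp add: sol_def)

lemma Gq_pos: "q > 0 \<Longrightarrow> Gq q y > 0" by (simp add: Gq_def Fq_pos)
lemma FGq_pos: "q > 0 \<Longrightarrow> FGq q y > 0" by (simp add: FGq_def Gq_pos Fq_pos add_pos_pos)

locale phisys =
  fixes q :: real and \<Phi> \<Phi>1 :: "real \<Rightarrow> real"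
  assumes q: "q > 0" and sol: "sol q \<Phi> \<Phi>1" and pos: "\<And>y. \<Phi> y > 0" and z: "\<Phi>1 0 = 0"
begin

lemma d0: "(\<Phi> has_real_derivative \<Phi>1 y) (at y)" using sol by (rule sol_D)
lemma d1: "(\<Phi>1 has_real_derivative (y * \<Phi>1 y + q * \<Phi> y)) (at y)" using sol by (rule sol_D1)

lemma hderiv: "((\<lambda>y. exp (-(y\<^sup>2)/2) * \<Phi>1 y) has_real_derivative exp (-(y\<^sup>2)/2) * (q * \<Phi> y)) (at y)"
proof (rule DERIV_cong[OF DERIV_mult[OF _ d1]])
  show "((\<lambda>y. exp (-(y\<^sup>2)/2)) has_real_derivative exp (-(y\<^sup>2)/2) * (-y)) (at y)"
    by (auto intro!: derivative_eq_intros simp: power2_eq_square)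
  show "exp (- y\<^sup>2 / 2) * - y * \<Phi>1 y + (y * \<Phi>1 y + q * \<Phi> y) * exp (- y\<^sup>2 / 2) = exp (- y\<^sup>2 / 2) * (q * \<Phi> y)"
    by (simp add: algebra_simps)
qed

lemma hmono: assumes "a < b" shows "exp (-(a\<^sup>2)/2) * \<Phi>1 a < exp (-(b\<^sup>2)/2) * \<Phi>1 b"
  using assms
proof (rule DERIV_pos_imp_increasing)
  fix x show "\<exists>y. ((\<lambda>y. exp (-(y\<^sup>2)/2) * \<Phi>1 y) has_real_derivative y) (at x) \<and> 0 < y"
    using hderiv[of x] pos[of x] q by (intro exI[of _ "exp (-(x\<^sup>2)/2) * (q * \<Phi> x)"]) auto
qed

lemma Phi1_pos: "y > 0 \<Longrightarrow> \<Phi>1 y > 0"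
  using hmono[of 0 y] by (simp add: z zero_less_mult_iff)

lemma Phi1_lower: "y \<ge> 1 \<Longrightarrow> \<Phi>1 y \<ge> exp (-1/2) * \<Phi>1 1 * exp (y\<^sup>2/2)"
proof -
  assume y: "y \<ge> 1"
  have "exp (-(1\<^sup>2)/2) * \<Phi>1 1 \<le> exp (-(y\<^sup>2)/2) * \<Phi>1 y"
    using hmono[of 1 y] y by (cases "y = 1") auto
  hence "exp (-1/2) * \<Phi>1 1 * exp (y\<^sup>2/2) \<le> exp (-(y\<^sup>2)/2) * \<Phi>1 y * exp (y\<^sup>2/2)"
    by (intro mult_right_mono) auto
  also have "\<dots> = \<Phi>1 y * (exp (-(y\<^sup>2)/2) * exp (y\<^sup>2/2))" by (simp only: mult_ac)
  also have "exp (-(y\<^sup>2)/2) * exp (y\<^sup>2/2) = 1" by (simp add: exp_add[symmetric])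
  finally show ?thesis by simp
qed

definition R where "R y = y * \<Phi>1 y - q * \<Phi> y"

lemma R0: "R 0 < 0" using pos[of 0] q by (simp add: R_def)

lemma R_exists: "\<exists>y>0. R y > 0"
proof (rule ccontr)
  assume "\<not> ?thesis"
  hence Rle: "\<And>y. y > 0 \<Longrightarrow> R y \<le> 0" by (meson not_le)
  define c where "c = exp (-1/2) * \<Phi>1 1"
  have c: "c > 0" using Phi1_pos[of 1] by (simp add: c_def)
  define K where "K = q * \<Phi> 1"
  have K: "K > 0" using q pos[of 1] by (simp add: K_def)
  have mono: "\<Phi> y * y powr (-q) \<le> \<Phi> 1 * 1 powr (-q)" if y: "y \<ge> 1" for y
  proof (rule DERIV_nonpos_imp_nonincreasing[OF y])
    fix s assume s: "1 \<le> s" "s \<le> y"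
    have "((\<lambda>s. \<Phi> s * s powr (-q)) has_real_derivative \<Phi>1 s * s powr (-q) + (-q * s powr (-q - 1)) * \<Phi> s) (at s)"
      by (rule DERIV_mult[OF d0 has_real_derivative_powr]) (use s in auto)
    moreover have "\<Phi>1 s * s powr (-q) + (-q * s powr (-q - 1)) * \<Phi> s = s powr (-q - 1) * R s"
    proof -
      have "s powr (-q) = s powr (-q - 1) * s" using s powr_plus1[of s "-q-1"] by simp
      thus ?thesis by (simp add: R_def algebra_simps)
    qed
    moreover have "s powr (-q - 1) * R s \<le> 0"
      using Rle[of s] s by (simp add: mult_nonneg_nonpos)
    ultimately show "\<exists>d. ((\<lambda>s. \<Phi> s * s powr (-q)) has_real_derivative d) (at s) \<and> d \<le> 0" by auto
  qed
  define y where "y = max 1 (max (2*q+2) (K/c + 1))"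
  have y1: "y \<ge> 1" and y2: "y \<ge> 2*q+2" and y3: "y \<ge> K/c + 1" by (auto simp: y_def)
  have "\<Phi> y \<le> \<Phi> 1 * y powr q"
  proof -
    have "\<Phi> y * y powr (-q) \<le> \<Phi> 1" using mono[OF y1] by simp
    hence "\<Phi> y * y powr (-q) * y powr q \<le> \<Phi> 1 * y powr q" by (rule mult_right_mono) simp
    thus ?thesis using y1 by (simp add: mult.assoc powr_add[symmetric])
  qed
  moreover have "y * \<Phi>1 y \<le> q * \<Phi> y" using Rle[of y] y1 by (simp add: R_def)
  moreover have "K * y powr q = q * (\<Phi> 1 * y powr q)" by (simp add: K_def)
  ultimately have A: "y * \<Phi>1 y \<le> K * y powr q"
    using mult_left_mono[of "\<Phi> y" "\<Phi> 1 * y powr q" q] q by linarith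
  have "y * (c * exp (y\<^sup>2/2)) \<le> y * \<Phi>1 y" using Phi1_lower[OF y1] y1 by (simp add: c_def)
  with A have B: "c * y * exp (y\<^sup>2/2) \<le> K * exp (q * y)"
  proof -
    have "y powr q \<le> exp (q * y)"
    proof -
      have "ln y \<le> y" using ln_le_minus_one[of y] y1 by simp
      hence "q * ln y \<le> q * y" using q by simp
      thus ?thesis using y1 by (simp add: powr_def)
    qed
    hence "K * y powr q \<le> K * exp (q * y)" using K by simp
    moreover have "c * y * exp (y\<^sup>2/2) = y * (c * exp (y\<^sup>2/2))" by (simp only: mult_ac)
    ultimately show ?thesis using A \<open>y * (c * exp (y\<^sup>2/2)) \<le> y * \<Phi>1 y\<close> by linarith
  qed
  have "y\<^sup>2/2 \<ge> q * y + y"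
  proof -
    have "y * (y/2 - q) \<ge> y * 1" using y2 y1 by (intro mult_left_mono) auto
    thus ?thesis by (simp add: power2_eq_square algebra_simps)
  qed
  hence "exp (y\<^sup>2/2) \<ge> exp (q*y) * exp y" by (simp add: exp_add[symmetric])
  hence "c * y * exp (y\<^sup>2/2) \<ge> c * y * (exp (q*y) * exp y)" using c y1 by (intro mult_left_mono) auto
  moreover have "c * y * (exp (q*y) * exp y) \<ge> c * exp y * exp (q*y)"
  proof -
    have X: "c * exp y * exp (q*y) \<ge> 0" using c by simp
    have "1 * (c * exp y * exp (q*y)) \<le> y * (c * exp y * exp (q*y))"
      by (rule mult_right_mono[OF y1 X])
    moreover have "c * y * (exp (q*y) * exp y) = y * (c * exp y * exp (q*y))" by (simp only: mult_ac)
    ultimately show ?thesis by linarith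
  qed
  moreover have "c * exp y > K"
  proof -
    have "exp y \<ge> 1 + y" by (rule exp_ge_add_one_self)
    hence "exp y > K / c" using y3 by linarith
    thus ?thesis using c by (simp add: field_simps)
  qed
  hence "c * exp y * exp (q*y) > K * exp (q*y)" by simp
  ultimately show False using B by linarith
qed


lemma R_deriv: "(R has_real_derivative ((1 - q + y\<^sup>2) * \<Phi>1 y + q * y * \<Phi> y)) (at y)"
  unfolding R_def[abs_def]
  by (rule DERIV_cong[OF DERIV_diff[OF DERIV_mult[OF DERIV_ident d1] DERIV_cmult[OF d0]]])
     (simp add: algebra_simps power2_eq_square)

lemma R_cont: "continuous_on S R"
  by (rule DERIV_continuous_on[OF has_field_derivative_at_within[OF R_deriv]])

definition T where "T y = y powr (q - 1) * exp (-(y\<^sup>2)/2) * R y"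

lemma T_deriv:
  assumes y: "y > 0"
  shows "(T has_real_derivative q * y powr (q - 2) * exp (-(y\<^sup>2)/2) * \<Phi> y * (2 * y\<^sup>2 + 1 - q)) (at y)"
proof -
  have e: "((\<lambda>y. exp (-(y\<^sup>2)/2)) has_real_derivative exp (-(y\<^sup>2)/2) * (-y)) (at y)"
    by (auto intro!: derivative_eq_intros simp: power2_eq_square)
  have "(T has_real_derivative ((q - 1) * y powr (q - 1 - 1) * exp (-(y\<^sup>2)/2) + exp (-(y\<^sup>2)/2) * (-y) * y powr (q - 1)) * R y
      + ((1 - q + y\<^sup>2) * \<Phi>1 y + q * y * \<Phi> y) * (y powr (q - 1) * exp (-(y\<^sup>2)/2))) (at y)"
    unfolding T_def[abs_def]
    by (rule DERIV_mult[OF DERIV_mult[OF has_real_derivative_powr[OF y] e] R_deriv])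
  moreover have "((q - 1) * y powr (q - 1 - 1) * exp (-(y\<^sup>2)/2) + exp (-(y\<^sup>2)/2) * (-y) * y powr (q - 1)) * R y
      + ((1 - q + y\<^sup>2) * \<Phi>1 y + q * y * \<Phi> y) * (y powr (q - 1) * exp (-(y\<^sup>2)/2))
      = q * y powr (q - 2) * exp (-(y\<^sup>2)/2) * \<Phi> y * (2 * y\<^sup>2 + 1 - q)"
  proof -
    have p1: "y powr (q - 1) = y powr (q - 2) * y" using powr_plus1[OF y, of "q-2"] by simp
    have p2: "q - 1 - 1 = q - 2" by simp
    show ?thesis unfolding p1 p2 by (simp add: R_def algebra_simps power2_eq_square)
  qed
  ultimately show ?thesis by simp
qed

lemma T_pos_factor: "y > 0 \<Longrightarrow> y powr (q - 1) * exp (-(y\<^sup>2)/2) > 0" by simp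

lemma T_sign: "y > 0 \<Longrightarrow> (T y < 0 \<longleftrightarrow> R y < 0) \<and> (T y > 0 \<longleftrightarrow> R y > 0) \<and> (T y = 0 \<longleftrightarrow> R y = 0)"
  unfolding T_def using T_pos_factor[of y]
  by (auto simp: mult_less_0_iff zero_less_mult_iff)

lemma T_cont_pos: "0 < a \<Longrightarrow> continuous_on {a..b} T"
  unfolding T_def
  by (intro continuous_intros R_cont) auto

lemma R_neg_small:
  assumes y: "y > 0" and c: "2 * y\<^sup>2 + 1 - q \<le> 0"
  shows "R y < 0"
proof -
  have q1: "q > 1" using y c by (smt (verit) zero_less_power)
  have cont: "continuous_on {0..y} T"
    unfolding T_def
    by (intro continuous_intros R_cont continuous_on_powr') (use q1 in auto)
  have "T 0 > T y"
  proof (rule DERIV_neg_imp_decreasing_open[OF y _ cont])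
    fix s assume s: "0 < s" "s < y"
    have "s\<^sup>2 < y\<^sup>2" using s by (simp add: power_strict_mono)
    hence "2 * s\<^sup>2 + 1 - q < 0" using c by simp
    hence "q * s powr (q - 2) * exp (-(s\<^sup>2)/2) * \<Phi> s * (2 * s\<^sup>2 + 1 - q) < 0"
      using s q pos[of s] by (simp add: mult_pos_neg)
    thus "\<exists>d. (T has_real_derivative d) (at s) \<and> d < 0" using T_deriv[OF s(1)] by blast
  qed
  moreover have "T 0 = 0" by (simp add: T_def)
  ultimately show ?thesis using T_sign[OF y] by simp
qed

lemma T_incr:
  assumes ab: "0 < a" "a < b" and c: "2 * a\<^sup>2 + 1 - q \<ge> 0"
  shows "T a < T b"
proof (rule DERIV_pos_imp_increasing_open[OF ab(2) _ T_cont_pos[OF ab(1)]])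
  fix s assume s: "a < s" "s < b"
  have "a\<^sup>2 < s\<^sup>2" using s ab by (simp add: power_strict_mono)
  hence "2 * s\<^sup>2 + 1 - q > 0" using c by simp
  hence "q * s powr (q - 2) * exp (-(s\<^sup>2)/2) * \<Phi> s * (2 * s\<^sup>2 + 1 - q) > 0"
    using s ab q pos[of s] by simp
  thus "\<exists>d. (T has_real_derivative d) (at s) \<and> d > 0" using T_deriv[of s] s ab by auto
qed

lemma root_props:
  assumes D: "D > 0" "R D = 0"
  shows "2 * D\<^sup>2 + 1 - q > 0" "\<And>y. y > D \<Longrightarrow> R y > 0" "\<And>y. 0 < y \<Longrightarrow> y < D \<Longrightarrow> R y < 0"
proof -
  show c: "2 * D\<^sup>2 + 1 - q > 0" using R_neg_small[OF D(1)] D(2) by force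
  have TD: "T D = 0" using T_sign[OF D(1)] D(2) by simp
  show "R y > 0" if "y > D" for y
    using T_incr[OF D(1) that] c TD T_sign[of y] that D(1) by simp
  show "R y < 0" if "0 < y" "y < D" for y
  proof (cases "2 * y\<^sup>2 + 1 - q \<le> 0")
    case True thus ?thesis using R_neg_small[OF that(1)] by simp
  next
    case False thus ?thesis using T_incr[OF that] TD T_sign[OF that(1)] by simp
  qed
qed

lemma root_ex1: "\<exists>!D. D > 0 \<and> R D = 0"
proof -
  obtain y0 where y0: "y0 > 0" "R y0 > 0" using R_exists by blast
  obtain D where D: "0 \<le> D" "D \<le> y0" "R D = 0"
    using IVT'[of R 0 0 y0] R0 y0 R_cont by force
  have "D \<noteq> 0" using R0 D by auto
  hence Dp: "D > 0" using D by simp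
  show ?thesis
  proof (rule ex1I[of _ D])
    show "D > 0 \<and> R D = 0" using Dp D by simp
    fix E assume E: "E > 0 \<and> R E = 0"
    show "E = D"
    proof (rule ccontr)
      assume "E \<noteq> D"
      hence "E < D \<or> D < E" by linarith
      thus False using root_props(2)[OF Dp D(3), of E] root_props(2)[of E D] E D(3) by force
    qed
  qed
qed

end

locale wsys = phisys +
  fixes G G1 :: "real \<Rightarrow> real" and D :: real
  assumes solG: "sol q G G1" and Gpos: "\<And>y. G y > 0" and Dpos: "D > 0" and RD: "R D = 0"
begin

definition c where "c = D powr q / \<Phi> D"
definition w where "w A = (D powr q * \<Phi> A / \<Phi> D - A powr q) / G A"
definition N where "N A = (c * \<Phi>1 A - q * A powr (q - 1)) * G A - (c * \<Phi> A - A powr q) * G1 A"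
definition M where "M A = exp (-(A\<^sup>2)/2) * N A"

lemma g0: "(G has_real_derivative G1 y) (at y)" using solG by (rule sol_D)
lemma g1: "(G1 has_real_derivative (y * G1 y + q * G y)) (at y)" using solG by (rule sol_D1)

lemma cpos: "c > 0" using Dpos pos[of D] by (simp add: c_def)

lemma w_alt: "w A = (c * \<Phi> A - A powr q) / G A"
  by (simp add: w_def c_def)

lemma wD: "w D = 0"
  using pos[of D] by (simp add: w_def)

lemma w0: "w 0 > 0"
  using pos[of 0] pos[of D] Gpos[of 0] Dpos by (simp add: w_def zero_less_divide_iff zero_less_mult_iff)

lemma w_cont: "continuous_on S w"
  if "S \<subseteq> {0..}"
proof -
  have "continuous_on S \<Phi>" by (rule DERIV_continuous_on[OF has_field_derivative_at_within[OF d0]])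
  moreover have "continuous_on S G" by (rule DERIV_continuous_on[OF has_field_derivative_at_within[OF g0]])
  moreover have "continuous_on S (\<lambda>A. A powr q)"
    by (intro continuous_on_powr' continuous_intros) (use that q in auto)
  ultimately have "continuous_on S (\<lambda>A. (c * \<Phi> A - A powr q) / G A)"
    using Gpos by (intro continuous_on_divide continuous_on_diff continuous_on_mult continuous_on_const)
       (auto simp: less_imp_neq[symmetric])
  thus ?thesis by (simp add: w_alt[abs_def])
qed

lemma w_deriv:
  assumes A: "A > 0"
  shows "(w has_real_derivative N A / (G A * G A)) (at A)"
proof -
  have "((\<lambda>A. (c * \<Phi> A - A powr q) / G A) has_real_derivative
      ((c * \<Phi>1 A - q * A powr (q - 1)) * G A - (c * \<Phi> A - A powr q) * G1 A) / (G A * G A)) (at A)"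
    by (rule DERIV_divide[OF DERIV_diff[OF DERIV_cmult[OF d0] has_real_derivative_powr[OF A]] g0])
       (use Gpos[of A] in simp)
  thus ?thesis unfolding N_def by (simp add: w_alt[abs_def])
qed

lemma M_deriv:
  assumes A: "A > 0"
  shows "(M has_real_derivative q * exp (-(A\<^sup>2)/2) * G A * A powr (q - 2) * (2 * A\<^sup>2 + 1 - q)) (at A)"
proof -
  have e: "((\<lambda>y. exp (-(y\<^sup>2)/2)) has_real_derivative exp (-(A\<^sup>2)/2) * (-A)) (at A)"
    by (auto intro!: derivative_eq_intros simp: power2_eq_square)
  have pq1: "((\<lambda>A. A powr (q - 1)) has_real_derivative (q - 1) * A powr (q - 1 - 1)) (at A)"
    by (rule has_real_derivative_powr[OF A])
  have pq: "((\<lambda>A. A powr q) has_real_derivative q * A powr (q - 1)) (at A)"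
    by (rule has_real_derivative_powr[OF A])
  have dN: "(N has_real_derivative
      (c * (A * \<Phi>1 A + q * \<Phi> A) - q * ((q - 1) * A powr (q - 1 - 1))) * G A + (c * \<Phi>1 A - q * A powr (q - 1)) * G1 A
      - ((c * \<Phi>1 A - q * A powr (q - 1)) * G1 A + (c * \<Phi> A - A powr q) * (A * G1 A + q * G A))) (at A)"
    unfolding N_def[abs_def]
    by (rule DERIV_cong[OF DERIV_diff[OF DERIV_mult[OF DERIV_diff[OF DERIV_cmult[OF d1] DERIV_cmult[OF pq1]] g0]
                                       DERIV_mult[OF DERIV_diff[OF DERIV_cmult[OF d0] pq] g1]]])
       (simp add: algebra_simps)
  have "(M has_real_derivative exp (-(A\<^sup>2)/2) * (-A) * N A + exp (-(A\<^sup>2)/2) *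
      ((c * (A * \<Phi>1 A + q * \<Phi> A) - q * ((q - 1) * A powr (q - 1 - 1))) * G A + (c * \<Phi>1 A - q * A powr (q - 1)) * G1 A
      - ((c * \<Phi>1 A - q * A powr (q - 1)) * G1 A + (c * \<Phi> A - A powr q) * (A * G1 A + q * G A)))) (at A)"
    unfolding M_def[abs_def]
    by (rule DERIV_cong[OF DERIV_mult[OF e dN]]) (simp add: algebra_simps)
  moreover have "exp (-(A\<^sup>2)/2) * (-A) * N A + exp (-(A\<^sup>2)/2) *
      ((c * (A * \<Phi>1 A + q * \<Phi> A) - q * ((q - 1) * A powr (q - 1 - 1))) * G A + (c * \<Phi>1 A - q * A powr (q - 1)) * G1 A
      - ((c * \<Phi>1 A - q * A powr (q - 1)) * G1 A + (c * \<Phi> A - A powr q) * (A * G1 A + q * G A)))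
      = q * exp (-(A\<^sup>2)/2) * G A * A powr (q - 2) * (2 * A\<^sup>2 + 1 - q)"
  proof -
    have p1: "A powr (q - 1) = A powr (q - 2) * A" using powr_plus1[OF A, of "q-2"] by simp
    have p0: "A powr q = A powr (q - 2) * A * A" using powr_plus1[OF A, of "q-1"] p1 by simp
    have p2: "q - 1 - 1 = q - 2" by simp
    show ?thesis unfolding p2 p1 p0 N_def p1 p0 by (simp add: algebra_simps power2_eq_square)
  qed
  ultimately show ?thesis by simp
qed


lemma M_cont: "0 < a \<Longrightarrow> continuous_on {a..b} M"
  by (rule DERIV_continuous_on[OF has_field_derivative_at_within[OF M_deriv]]) auto

lemma NM: "(M A > 0 \<longleftrightarrow> N A > 0) \<and> (M A = 0 \<longleftrightarrow> N A = 0)"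
  by (simp add: M_def zero_less_mult_iff)

lemma w_incr_on:
  assumes "0 \<le> a" "a < b" "\<And>s. a < s \<Longrightarrow> s < b \<Longrightarrow> M s > 0"
  shows "w a < w b"
proof (rule DERIV_pos_imp_increasing_open[OF assms(2) _ w_cont])
  fix s assume s: "a < s" "s < b"
  have "N s > 0" using assms(3)[OF s] NM by blast
  hence "N s / (G s * G s) > 0" using Gpos[of s] by simp
  thus "\<exists>y. (w has_real_derivative y) (at s) \<and> y > 0" using w_deriv[of s] s assms(1) by auto
qed (use assms in auto)

lemma maxim_props:
  assumes A: "A \<in> {0..D}" and mx: "\<forall>B\<in>{0..D}. w B \<le> w A" and Ap: "A > 0"
  shows "A < D" "N A = 0" "2 * A\<^sup>2 + 1 - q \<le> 0"
proof -
  have wA: "w A > 0" using mx w0 Dpos by force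
  show AD: "A < D" using wA wD A by (cases "A = D") auto
  show NA: "N A = 0"
  proof -
    have "N A / (G A * G A) = 0"
    proof (rule DERIV_local_max[OF w_deriv[OF Ap]])
      show "0 < min A (D - A)" using Ap AD by simp
      show "\<forall>y. \<bar>A - y\<bar> < min A (D - A) \<longrightarrow> w y \<le> w A"
        using mx by (auto simp: abs_less_iff)
    qed
    thus ?thesis using Gpos[of A] by simp
  qed
  show "2 * A\<^sup>2 + 1 - q \<le> 0"
  proof (rule ccontr)
    assume c: "\<not> ?thesis"
    have "w A < w D"
    proof (rule w_incr_on)
      show "0 \<le> A" "A < D" using Ap AD by auto
      fix s assume s: "A < s" "s < D"
      have "M A < M s"
      proof (rule DERIV_pos_imp_increasing_open[OF s(1) _ M_cont[OF Ap]])
        fix u assume u: "A < u" "u < s"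
        have "A\<^sup>2 < u\<^sup>2" using u Ap by (simp add: power_strict_mono)
        hence "2 * u\<^sup>2 + 1 - q > 0" using c by simp
        hence "q * exp (-(u\<^sup>2)/2) * G u * u powr (q - 2) * (2 * u\<^sup>2 + 1 - q) > 0"
          using q Gpos[of u] u Ap by simp
        thus "\<exists>y. (M has_real_derivative y) (at u) \<and> y > 0" using M_deriv[of u] u Ap by auto
      qed
      moreover have "M A = 0" using NA NM by blast
      ultimately show "M s > 0" by simp
    qed
    thus False using wA wD by simp
  qed
qed

lemma maxim_unique:
  assumes A1: "A1 \<in> {0..D}" "\<forall>B\<in>{0..D}. w B \<le> w A1"
    and A2: "A2 \<in> {0..D}" "\<forall>B\<in>{0..D}. w B \<le> w A2"
  shows "A1 = A2"
proof -
  have *: False if a: "a \<in> {0..D}" "\<forall>B\<in>{0..D}. w B \<le> w a" "b \<in> {0..D}" "\<forall>B\<in>{0..D}. w B \<le> w b" "a < b" for a b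
  proof -
    have bp: "b > 0" using a by auto
    have Nb: "N b = 0" and cb: "2 * b\<^sup>2 + 1 - q \<le> 0" using maxim_props[OF a(3,4) bp] by auto
    have "w a < w b"
    proof (rule w_incr_on)
      show "0 \<le> a" "a < b" using a by auto
      fix s assume s: "a < s" "s < b"
      have sp: "s > 0" using s a by auto
      have "M s > M b"
      proof (rule DERIV_neg_imp_decreasing_open[OF s(2) _ M_cont[OF sp]])
        fix u assume u: "s < u" "u < b"
        have "u\<^sup>2 < b\<^sup>2" using u sp by (simp add: power_strict_mono)
        hence "2 * u\<^sup>2 + 1 - q < 0" using cb by simp
        hence "q * exp (-(u\<^sup>2)/2) * G u * u powr (q - 2) * (2 * u\<^sup>2 + 1 - q) < 0"
          using q Gpos[of u] u sp by (simp add: mult_pos_neg)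
        thus "\<exists>y. (M has_real_derivative y) (at u) \<and> y < 0" using M_deriv[of u] u sp by auto
      qed
      moreover have "M b = 0" using Nb NM by blast
      ultimately show "M s > 0" by simp
    qed
    moreover have "w b \<le> w a" using a by auto
    ultimately show False by simp
  qed
  show ?thesis
  proof (rule ccontr)
    assume "A1 \<noteq> A2"
    hence "A1 < A2 \<or> A2 < A1" by linarith
    thus False using *[OF A1 A2] *[OF A2 A1] by blast
  qed
qed

lemma maxim_ex: "\<exists>A\<in>{0..D}. \<forall>B\<in>{0..D}. w B \<le> w A"
  using continuous_attains_sup[of "{0..D}" w] w_cont[of "{0..D}"] Dpos by auto

lemma maxim_ex1: "\<exists>!A. A \<in> {0..D} \<and> (\<forall>B\<in>{0..D}. w B \<le> w A)"
  using maxim_ex maxim_unique by blast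

end

lemma Dstar_char:
  assumes q: "q > 0"
  shows "Dstar q > 0" "phisys.R q (FGq q) (\<lambda>y. Fq (q+1) y - Fq (q+1) (- y)) (Dstar q) = 0"
proof -
  define \<Phi>1 where "\<Phi>1 = (\<lambda>y. Fq (q+1) y - Fq (q+1) (- y))"
  interpret P: phisys q "FGq q" \<Phi>1
    by unfold_locales (auto simp: q \<Phi>1_def sol_FG FGq_pos)
  have eq: "(E > 0 \<and> q - E * deriv (FGq q) E / FGq q E = 0) \<longleftrightarrow> (E > 0 \<and> P.R E = 0)" for E
  proof -
    have "deriv (FGq q) E = \<Phi>1 E" by (rule DERIV_imp_deriv[OF P.d0])
    moreover have "FGq q E > 0" by (rule P.pos)
    ultimately show ?thesis by (auto simp: P.R_def field_simps)
  qed
  have ex: "\<exists>!D. D > 0 \<and> q - D * deriv (FGq q) D / FGq q D = 0"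
    unfolding eq by (rule P.root_ex1)
  have "Dstar q > 0 \<and> q - Dstar q * deriv (FGq q) (Dstar q) / FGq q (Dstar q) = 0"
    unfolding Dstar_def by (rule theI'[OF ex])
  thus "Dstar q > 0" "P.R (Dstar q) = 0" using eq by auto
qed

lemma Astar_char:
  assumes q: "q > 0"
  shows "Astar q \<in> {0..Dstar q}" "Astar q > 0 \<Longrightarrow> 2 * (Astar q)\<^sup>2 + 1 - q \<le> 0"
proof -
  define \<Phi>1 where "\<Phi>1 = (\<lambda>y. Fq (q+1) y - Fq (q+1) (- y))"
  interpret W: wsys q "FGq q" \<Phi>1 "Gq q" "\<lambda>y. - Fq (q+1) (- y)" "Dstar q"
    by unfold_locales (auto simp: q \<Phi>1_def sol_FG FGq_pos sol_G Gq_pos Dstar_char[OF q])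
  have wq: "wfun q = W.w" by (rule ext) (simp add: wfun_def W.w_def)
  have "Astar q \<in> {0..Dstar q} \<and> (\<forall>B\<in>{0..Dstar q}. wfun q B \<le> wfun q (Astar q))"
    unfolding Astar_def wq by (rule theI'[OF W.maxim_ex1])
  thus A: "Astar q \<in> {0..Dstar q}" and "Astar q > 0 \<Longrightarrow> 2 * (Astar q)\<^sup>2 + 1 - q \<le> 0"
    using W.maxim_props[of "Astar q"] wq by auto
qed

lemma sol_Gs:
  assumes q: "q > 0" and sg: "\<sigma> = 1 \<or> \<sigma> = -1"
  shows "sol q (\<lambda>y. Gq q (\<sigma> * y)) (\<lambda>y. \<sigma> * (- Fq (q+1) (- (\<sigma> * y))))"
  using sg
proof
  assume "\<sigma> = 1" thus ?thesis using sol_G[OF q] by simp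
next
  assume "\<sigma> = -1" thus ?thesis using sol_reflect[OF sol_G[OF q]] by simp
qed

theorem lemma5p5:
  fixes q :: real
  assumes "q > 0"
  shows "(\<forall>t x. 0 \<le> t \<and> t < 1 \<and> \<bar>x\<bar> > Astar q * sqrt (1 - t)
            \<longrightarrow> Lop (Wstar q) t x = 0)
       \<and> (Astar q > 0 \<longrightarrow>
          (\<forall>t x. 0 \<le> t \<and> t < 1 \<and> 0 < \<bar>x\<bar> \<and> \<bar>x\<bar> < Astar q * sqrt (1 - t)
            \<longrightarrow> Lop (Wstar q) t x \<le> 0))"
proof (intro conjI allI impI)
  have q: "q > 0" by (rule assms)
  have A0: "Astar q \<ge> 0" and AD: "Astar q \<le> Dstar q" using Astar_char(1)[OF q] by auto
  fix t x :: real
  define \<sigma> :: real where "\<sigma> = (if x > 0 then 1 else -1)"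
  have sg: "\<sigma> = 1 \<or> \<sigma> = -1" by (simp add: \<sigma>_def)
  have sabs: "\<And>z. \<sigma> * z > 0 \<Longrightarrow> \<bar>z\<bar> = \<sigma> * z" using sg by auto
  {
    assume h: "0 \<le> t \<and> t < 1 \<and> \<bar>x\<bar> > Astar q * sqrt (1 - t)"
    have t: "t < 1" using h by simp
    have xnz: "x \<noteq> 0" using h A0 by (smt (verit) mult_nonneg_nonneg real_sqrt_ge_zero)
    have sx: "\<sigma> * x > 0" using xnz by (auto simp: \<sigma>_def)
    define k where "k = wfun q (Astar q)"
    define V where "V = (\<lambda>s z. k * ((1 - s) powr (q/2) * Gq q (\<sigma> * (z / sqrt (1 - s)))) - 0 * (\<sigma> * z) powr q)"
    define S where "S = {p :: real \<times> real. fst p < 1 \<and> \<sigma> * snd p > 0 \<and> Astar q * sqrt (1 - fst p) < \<bar>snd p\<bar>}"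
    have oS: "open S" unfolding S_def
      by (intro open_Collect_conj open_Collect_less continuous_intros)
    have tS: "(t, x) \<in> S" using h sx by (simp add: S_def)
    have "Lop (Wstar q) t x = Lop V t x"
    proof (rule Lop_cong[OF oS tS])
      fix s z assume "(s, z) \<in> S"
      hence s: "s < 1" "\<sigma> * z > 0" "Astar q * sqrt (1 - s) < \<bar>z\<bar>" by (auto simp: S_def)
      have "\<bar>z\<bar> / sqrt (1 - s) = \<sigma> * (z / sqrt (1 - s))" using sabs[OF s(2)] by simp
      thus "Wstar q s z = V s z" using s by (simp add: Wstar_def V_def k_def mult_ac)
    qed
    also have "\<dots> = 0 * (q * (\<sigma> * x) powr q / (1 - t) - q * (q - 1) / 2 * (\<sigma> * x) powr (q - 2))"
      unfolding V_def by (rule Lop_V[OF sol_Gs[OF q sg] t sg sx])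
    finally show "Lop (Wstar q) t x = 0" by simp
  }
  {
    assume Ap: "Astar q > 0"
    assume h: "0 \<le> t \<and> t < 1 \<and> 0 < \<bar>x\<bar> \<and> \<bar>x\<bar> < Astar q * sqrt (1 - t)"
    have t: "t < 1" using h by simp
    have cA: "2 * (Astar q)\<^sup>2 + 1 - q \<le> 0" by (rule Astar_char(2)[OF q Ap])
    have xnz: "x \<noteq> 0" using h by auto
    have sx: "\<sigma> * x > 0" using xnz by (auto simp: \<sigma>_def)
    define k where "k = Dstar q powr q / FGq q (Dstar q)"
    define V where "V = (\<lambda>s z. k * ((1 - s) powr (q/2) * FGq q (z / sqrt (1 - s))) - 1 * (\<sigma> * z) powr q)"
    define S where "S = {p :: real \<times> real. fst p < 1 \<and> \<sigma> * snd p > 0 \<and> \<bar>snd p\<bar> < Astar q * sqrt (1 - fst p)}"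
    have oS: "open S" unfolding S_def
      by (intro open_Collect_conj open_Collect_less continuous_intros)
    have tS: "(t, x) \<in> S" using h sx by (simp add: S_def)
    have "Lop (Wstar q) t x = Lop V t x"
    proof (rule Lop_cong[OF oS tS])
      fix s z assume "(s, z) \<in> S"
      hence s: "s < 1" "\<sigma> * z > 0" "\<bar>z\<bar> < Astar q * sqrt (1 - s)" by (auto simp: S_def)
      have "Astar q * sqrt (1 - s) \<le> Dstar q * sqrt (1 - s)" using AD s(1) by (intro mult_right_mono) auto
      hence zD: "\<bar>z\<bar> < Dstar q * sqrt (1 - s)" using s(3) by linarith
      have nz: "\<not> \<bar>z\<bar> > Astar q * sqrt (1 - s)" using s(3) by linarith
      show "Wstar q s z = V s z" using s zD nz sabs[OF s(2)]
        by (simp add: Wstar_def hfun_def Ubar_def V_def k_def)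
    qed
    also have "\<dots> = 1 * (q * (\<sigma> * x) powr q / (1 - t) - q * (q - 1) / 2 * (\<sigma> * x) powr (q - 2))"
      unfolding V_def by (rule Lop_V[OF sol_FG[OF q] t sg sx])
    also have "\<dots> \<le> 0"
    proof -
      define \<rho> where "\<rho> = \<sigma> * x"
      have \<rho>: "\<rho> > 0" "\<rho> = \<bar>x\<bar>" using sx sabs[OF sx] by (auto simp: \<rho>_def)
      have a: "1 - t > 0" using t by simp
      have p: "\<rho> powr q = \<rho> powr (q - 2) * \<rho>\<^sup>2"
        using powr_add[of \<rho> "q - 2" 2] \<rho>(1) by (simp add: powr_numeral)
      have "\<rho>\<^sup>2 < (Astar q)\<^sup>2 * (1 - t)"
      proof -
        have "\<rho>\<^sup>2 < (Astar q * sqrt (1 - t))\<^sup>2" using h \<rho> by (intro power_strict_mono) auto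
        thus ?thesis using a by (simp add: power_mult_distrib)
      qed
      hence "\<rho>\<^sup>2 / (1 - t) < (Astar q)\<^sup>2" using a by (simp add: divide_less_eq)
      moreover have "(Astar q)\<^sup>2 \<le> (q - 1) / 2" using cA by simp
      ultimately have lt: "\<rho>\<^sup>2 / (1 - t) \<le> (q - 1) / 2" by (rule order.trans[OF less_imp_le])
      have "q * \<rho> powr q / (1 - t) - q * (q - 1) / 2 * \<rho> powr (q - 2)
          = q * \<rho> powr (q - 2) * (\<rho>\<^sup>2 / (1 - t) - (q - 1) / 2)"
        unfolding p by (simp add: algebra_simps)
      also have "\<dots> \<le> 0" using q \<rho>(1) lt by (intro mult_nonneg_nonpos) auto
      finally show ?thesis by (simp add: \<rho>_def)
    qed
    finally show "Lop (Wstar q) t x \<le> 0" .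
  }
qed


end
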